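(* Let $K$ be a field, let $e_1,\dots,e_m$ be a basis of $K^m$, and let $T_1,\dots,T_k:K^m\to K^n$ be linear maps. Suppose that for every $l$ and every choice of distinct indices $i_1,\dots,i_l\in\{1,\dots,m\}$, the span of the vectors $\{T_j(e_{i_t}): 1\le t\le l,\ 1\le j\le k\}$ has dimension at least $2l$. Then there exist functions $\phi,\psi:\{1,\dots,m\}\to\{1,\dots,k\}$ such that the $2m$ vectors $T_{\phi(1)}(e_1),\dots,T_{\phi(m)}(e_m),T_{\psi(1)}(e_1),\dots,T_{\psi(m)}(e_m)$ are linearly independent. *)

theory Defs
  imports "HOL-Analysis.Analysis"
begin

end

theory Submission
  imports Defs
begin

lemma dim_submod:
  fixes S T :: "('a::field ^ 'n::finite) set"
  shows "vec.dim (S \<union> T) + vec.dim (S \<inter> T) \<le> vec.dim S + vec.dim T"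
proof -
  have e: "vec.dim {x + y |x y. x \<in> vec.span S \<and> y \<in> vec.span T} + vec.dim (vec.span S \<inter> vec.span T)
        = vec.dim (vec.span S) + vec.dim (vec.span T)"
    by (rule vec.dim_sums_Int) (auto simp: vec.subspace_span)
  have "vec.dim (S \<union> T) = vec.dim (vec.span (S \<union> T))" by simp
  also have "vec.span (S \<union> T) = {x + y |x y. x \<in> vec.span S \<and> y \<in> vec.span T}"
    by (rule vec.span_Un)
  finally have 1: "vec.dim (S \<union> T) = vec.dim {x + y |x y. x \<in> vec.span S \<and> y \<in> vec.span T}" .
  have 2: "vec.dim (S \<inter> T) \<le> vec.dim (vec.span S \<inter> vec.span T)"
    by (rule vec.dim_subset) (auto intro: vec.span_base)
  show ?thesis using e 1 2 by simp
qed

lemma rado: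
  fixes A :: "'i \<Rightarrow> ('a::field ^ 'n::finite) set"
  assumes "finite N" "\<forall>x\<in>N. finite (A x)" "\<forall>J\<subseteq>N. card J \<le> vec.dim (\<Union>(A ` J))"
  shows "\<exists>f. (\<forall>x\<in>N. f x \<in> A x) \<and> inj_on f N \<and> vec.independent (f ` N)"
  using assms(2,3)
proof (induction "\<Sum>x\<in>N. card (A x)" arbitrary: A rule: less_induct)
  case less
  show ?case
  proof (cases "\<exists>x\<in>N. card (A x) \<ge> 2")
    case True
    then obtain x where xN: "x \<in> N" and cx: "card (A x) \<ge> 2" by blast
    then obtain y1 y2 where y: "y1 \<in> A x" "y2 \<in> A x" "y1 \<noteq> y2"
    proof -
      have "finite (A x)" using less.prems(1) xN by blast
      then have "\<not> (\<forall>a\<in>A x. \<forall>b\<in>A x. a = b)" using cx card_le_Suc0_iff_eq[of "A x"] by auto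
      then show ?thesis using that by blast
    qed
    define cond where "cond B = (\<forall>J\<subseteq>N. card J \<le> vec.dim (\<Union>(B ` J)))" for B :: "'i \<Rightarrow> ('a ^ 'n) set"
    have fail: "\<exists>K. K \<subseteq> N - {x} \<and> vec.dim (\<Union>(A ` K) \<union> (A x - {y})) \<le> card K"
      if nc: "\<not> cond (A(x := A x - {y}))" for y
    proof -
      from nc obtain J where J: "J \<subseteq> N" "card J > vec.dim (\<Union>((A(x := A x - {y})) ` J))"
        unfolding cond_def by (auto simp: not_le)
      have "x \<in> J"
      proof (rule ccontr)
        assume "x \<notin> J"
        then have "\<Union>((A(x := A x - {y})) ` J) = \<Union>(A ` J)" by auto
        then show False using J less.prems(2) by auto
      qed
      have fJ: "finite J" using J(1) assms(1) finite_subset by blast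
      have "\<Union>((A(x := A x - {y})) ` J) = \<Union>(A ` (J - {x})) \<union> (A x - {y})"
        using \<open>x \<in> J\<close> by auto
      moreover have "card J = card (J - {x}) + 1" using \<open>x \<in> J\<close> fJ
        using card_Suc_Diff1[OF fJ \<open>x \<in> J\<close>] by simp
      ultimately show ?thesis using J by (intro exI[of _ "J - {x}"]) auto
    qed
    have "\<exists>y. y \<in> A x \<and> cond (A(x := A x - {y}))"
    proof (rule ccontr)
      assume "\<not> ?thesis"
      then have n1: "\<not> cond (A(x := A x - {y1}))" and n2: "\<not> cond (A(x := A x - {y2}))"
        using y by auto
      obtain K1 where K1: "K1 \<subseteq> N - {x}" "vec.dim (\<Union>(A ` K1) \<union> (A x - {y1})) \<le> card K1"
        using fail[OF n1] by blast
      obtain K2 where K2: "K2 \<subseteq> N - {x}" "vec.dim (\<Union>(A ` K2) \<union> (A x - {y2})) \<le> card K2"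
        using fail[OF n2] by blast
      define S1 where "S1 = \<Union>(A ` K1) \<union> (A x - {y1})"
      define S2 where "S2 = \<Union>(A ` K2) \<union> (A x - {y2})"
      have fK1: "finite K1" "finite K2" using K1 K2 assms(1) finite_subset by blast+
      have u: "\<Union>(A ` (insert x (K1 \<union> K2))) \<subseteq> S1 \<union> S2"
        using y unfolding S1_def S2_def by auto
      have i: "\<Union>(A ` (K1 \<inter> K2)) \<subseteq> S1 \<inter> S2"
        unfolding S1_def S2_def by auto
      have "card (insert x (K1 \<union> K2)) \<le> vec.dim (\<Union>(A ` (insert x (K1 \<union> K2))))"
        using less.prems(2)[rule_format, of "insert x (K1 \<union> K2)"] K1 K2 xN by blast
      also have "\<dots> \<le> vec.dim (S1 \<union> S2)" by (rule vec.dim_subset[OF u])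
      moreover have "x \<notin> K1 \<union> K2" using K1 K2 by blast
      ultimately have a: "card (K1 \<union> K2) + 1 \<le> vec.dim (S1 \<union> S2)"
        using fK1 by simp
      have "card (K1 \<inter> K2) \<le> vec.dim (\<Union>(A ` (K1 \<inter> K2)))"
        using less.prems(2)[rule_format, of "K1 \<inter> K2"] K1 by blast
      also have "\<dots> \<le> vec.dim (S1 \<inter> S2)" by (rule vec.dim_subset[OF i])
      finally have b: "card (K1 \<inter> K2) \<le> vec.dim (S1 \<inter> S2)" .
      have c: "card (K1 \<union> K2) + card (K1 \<inter> K2) = card K1 + card K2"
        using card_Un_Int[OF fK1] by simp
      have "vec.dim (S1 \<union> S2) + vec.dim (S1 \<inter> S2) \<le> vec.dim S1 + vec.dim S2"
        by (rule dim_submod)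
      then show False using a b c K1(2) K2(2) unfolding S1_def[symmetric] S2_def[symmetric] by linarith
    qed
    then obtain y where yA: "y \<in> A x" and cy: "cond (A(x := A x - {y}))" by blast
    define B where "B = A(x := A x - {y})"
    have lt: "(\<Sum>z\<in>N. card (B z)) < (\<Sum>z\<in>N. card (A z))"
    proof -
      have "(\<Sum>z\<in>N. card (B z)) = card (B x) + (\<Sum>z\<in>N - {x}. card (B z))"
        using xN assms(1) by (simp add: sum.remove)
      also have "(\<Sum>z\<in>N - {x}. card (B z)) = (\<Sum>z\<in>N - {x}. card (A z))"
        by (rule sum.cong) (auto simp: B_def)
      also have "card (B x) < card (A x)" using yA less.prems(1) xN
        unfolding B_def by (simp add: card_Diff1_less del: card_Diff_insert)
      finally have "(\<Sum>z\<in>N. card (B z)) < card (A x) + (\<Sum>z\<in>N - {x}. card (A z))" by simp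
      also have "\<dots> = (\<Sum>z\<in>N. card (A z))"
        using xN assms(1) by (simp add: sum.remove)
      finally show ?thesis .
    qed
    have "\<forall>x\<in>N. finite (B x)" using less.prems(1) by (auto simp: B_def)
    moreover have "\<forall>J\<subseteq>N. card J \<le> vec.dim (\<Union>(B ` J))" using cy unfolding cond_def B_def .
    ultimately obtain f where f: "\<forall>x\<in>N. f x \<in> B x" "inj_on f N" "vec.independent (f ` N)"
      using less.hyps[OF lt] by blast
    have "\<forall>z\<in>N. f z \<in> A z" using f(1) by (auto simp: B_def split: if_splits)
    then show ?thesis using f by blast
  next
    case False
    define f where "f z = (SOME w. w \<in> A z)" for z
    have ne: "A z \<noteq> {}" if "z \<in> N" for z
    proof
      assume "A z = {}"
      moreover have "card {z} \<le> vec.dim (\<Union>(A ` {z}))" using less.prems(2) that by blast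
      ultimately show False using vec.dim_empty by simp
    qed
    have Az: "A z = {f z}" if "z \<in> N" for z
    proof -
      have "f z \<in> A z" using ne[OF that] unfolding f_def by (simp add: some_in_eq)
      moreover have "card (A z) \<le> 1" using False that by auto
      moreover have "finite (A z)" using less.prems(1) that by blast
      ultimately have "\<forall>a\<in>A z. \<forall>b\<in>A z. a = b" using card_le_Suc0_iff_eq[of "A z"] by simp
      then show ?thesis using \<open>f z \<in> A z\<close> by blast
    qed
    have U: "\<Union>(A ` N) = f ` N" using Az by auto
    have fin: "finite (f ` N)" using assms(1) by simp
    have d1: "card N \<le> vec.dim (f ` N)" using less.prems(2) U by (metis order_refl)
    have d2: "vec.dim (f ` N) \<le> card (f ` N)"
      by (rule vec.dim_le_card[OF _ fin]) (auto intro: vec.span_base)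
    have d3: "card (f ` N) \<le> card N" using assms(1) by (rule card_image_le)
    have inj: "inj_on f N" using d1 d2 d3 assms(1) by (intro eq_card_imp_inj_on) auto
    have ind: "vec.independent (f ` N)"
      by (rule vec.card_le_dim_spanning[of _ "f ` N"]) (use fin d1 d2 d3 in \<open>auto intro: vec.span_base\<close>)
    show ?thesis using Az inj ind by (intro exI[of _ f]) auto
  qed
qed

theorem lemma6:
  fixes e :: "'m::finite \<Rightarrow> 'a::field ^ 'm"
    and T :: "nat \<Rightarrow> 'a ^ 'm \<Rightarrow> 'a ^ 'n::finite"
    and k :: nat
  assumes e_inj: "inj e"
    and e_indep: "vec.independent (range e)"
    and e_span: "vec.span (range e) = UNIV"
    and T_lin: "\<And>j. j \<in> {1..k} \<Longrightarrow> Vector_Spaces.linear (*s) (*s) (T j)"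
    and hyp: "\<And>I :: 'm set. vec.dim {T j (e i) | i j. i \<in> I \<and> j \<in> {1..k}} \<ge> 2 * card I"
  shows "\<exists>\<phi> \<psi> :: 'm \<Rightarrow> nat.
           (\<forall>i. \<phi> i \<in> {1..k} \<and> \<psi> i \<in> {1..k}) \<and>
           (let v = (\<lambda>x :: 'm + 'm. case x of Inl i \<Rightarrow> T (\<phi> i) (e i) | Inr i \<Rightarrow> T (\<psi> i) (e i))
            in inj v \<and> vec.independent (range v))"
proof -
  define B where "B i = (\<lambda>j. T j (e i)) ` {1..k}" for i
  define A where "A x = (case x of Inl i \<Rightarrow> B i | Inr i \<Rightarrow> B i)" for x :: "'m + 'm"
  have fin: "\<forall>x\<in>UNIV. finite (A x)" by (auto simp: A_def B_def split: sum.splits)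
  have cond: "\<forall>J\<subseteq>UNIV. card J \<le> vec.dim (\<Union>(A ` J))"
  proof (intro allI impI)
    fix J :: "('m + 'm) set"
    define I where "I = {i. Inl i \<in> J \<or> Inr i \<in> J}"
    have U: "\<Union>(A ` J) = {T j (e i) | i j. i \<in> I \<and> j \<in> {1..k}}"
      unfolding I_def A_def B_def by (auto split: sum.splits) (metis Inl_Inr_False)+
    have "J \<subseteq> Inl ` I \<union> Inr ` I" unfolding I_def by (auto intro: sum.exhaust)
    then have "card J \<le> card (Inl ` I \<union> Inr ` I)" by (intro card_mono) auto
    also have "\<dots> \<le> card (Inl ` I :: ('m+'m) set) + card (Inr ` I :: ('m+'m) set)" by (rule card_Un_le)
    also have "\<dots> \<le> 2 * card I" using card_image_le[of I "Inl :: 'm \<Rightarrow> 'm + 'm"] card_image_le[of I "Inr :: 'm \<Rightarrow> 'm + 'm"] by simp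
    also have "\<dots> \<le> vec.dim (\<Union>(A ` J))" unfolding U by (rule hyp)
    finally show "card J \<le> vec.dim (\<Union>(A ` J))" .
  qed
  obtain f where f: "\<forall>x\<in>UNIV. f x \<in> A x" "inj_on f UNIV" "vec.independent (f ` UNIV)"
    using rado[OF finite fin cond] by blast
  define \<phi> where "\<phi> i = (SOME j. j \<in> {1..k} \<and> f (Inl i) = T j (e i))" for i
  define \<psi> where "\<psi> i = (SOME j. j \<in> {1..k} \<and> f (Inr i) = T j (e i))" for i
  have p: "\<phi> i \<in> {1..k} \<and> f (Inl i) = T (\<phi> i) (e i)" for i
  proof -
    have "f (Inl i) \<in> B i" using f(1)[rule_format, of "Inl i"] by (simp add: A_def)
    then have "\<exists>j. j \<in> {1..k} \<and> f (Inl i) = T j (e i)" by (auto simp: B_def)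
    then show ?thesis unfolding \<phi>_def by (rule someI_ex)
  qed
  have q: "\<psi> i \<in> {1..k} \<and> f (Inr i) = T (\<psi> i) (e i)" for i
  proof -
    have "f (Inr i) \<in> B i" using f(1)[rule_format, of "Inr i"] by (simp add: A_def)
    then have "\<exists>j. j \<in> {1..k} \<and> f (Inr i) = T j (e i)" by (auto simp: B_def)
    then show ?thesis unfolding \<psi>_def by (rule someI_ex)
  qed
  have v: "(\<lambda>x :: 'm + 'm. case x of Inl i \<Rightarrow> T (\<phi> i) (e i) | Inr i \<Rightarrow> T (\<psi> i) (e i)) = f"
    using p q by (auto split: sum.splits)
  show ?thesis
    by (rule exI[of _ \<phi>], rule exI[of _ \<psi>]) (use p q f v in \<open>simp add: Let_def\<close>)
qed

end
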